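(* Let $a=(a_1,\dots,a_d)\in\mathcal{UN}_d$ and let $A_a$ be a real symmetric matrix associated to $a$. Then for each $j=1,\dots,d$, all $j\times j$ principal minors of $A_a$ are equal.
   Context: A polynomial in $\mathbb{R}[z]$ is hyperbolic if all its roots are real. A sequence $a\in\mathbb{R}^d$ is a Nuij sequence if for every hyperbolic $p\in\mathbb{R}[z]$ of degree $d$, $p_a(z,s):=p(z)+\sum_{k=1}^d a_k s^k p^{(k)}(z)$ is hyperbolic for all $s\in\mathbb{R}$. A Nuij sequence $a$ admits a universal determinantal representation if there exists a real symmetric $d\times d$ matrix $A_a$ such that for every monic hyperbolic polynomial $p(z)=(z+\lambda_1)\cdots(z+\lambda_d)$ of degree $d$ one has $p_a(z,s)=\det(zI+D+sA_a)$, where $D$ is the diagonal matrix with diagonal entries $\lambda_1,\dots,\lambda_d$ in an arbitrary order; such $A_a$ is called a matrix associated to $a$. $\mathcal{UN}_d$ is the set of Nuij sequences in $\mathbb{R}^d$ admitting a universal determinantal representation. A $j\times j$ principal minor of a $d\times d$ matrix is the determinant of the submatrix obtained by deleting the same set of $d-j$ row and column indices. *)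

theory Defs
  imports "Jordan_Normal_Form.DL_Submatrix" "Jordan_Normal_Form.Determinant"
    "HOL-Computational_Algebra.Polynomial"
begin

definition hyperbolic :: "real poly \<Rightarrow> bool" where
  "hyperbolic p \<longleftrightarrow> (\<forall>z::complex. poly (map_poly complex_of_real p) z = 0 \<longrightarrow> z \<in> \<real>)"

text \<open>p_a(z,s) = p(z) + sum_{k=1}^d a_k s^k p^(k)(z), as a polynomial in z for fixed s.
  The sequence a = (a_1,...,a_d) is represented by a function on nat; only a 1..a d matter.\<close>
definition nuij_poly :: "nat \<Rightarrow> (nat \<Rightarrow> real) \<Rightarrow> real poly \<Rightarrow> real \<Rightarrow> real poly" where
  "nuij_poly d a p s = p + (\<Sum>k\<in>{1..d}. smult (a k * s ^ k) ((pderiv ^^ k) p))"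

definition nuij_seq :: "nat \<Rightarrow> (nat \<Rightarrow> real) \<Rightarrow> bool" where
  "nuij_seq d a \<longleftrightarrow>
     (\<forall>p. hyperbolic p \<and> degree p = d \<longrightarrow> (\<forall>s. hyperbolic (nuij_poly d a p s)))"

text \<open>A is a matrix associated to a: real symmetric d x d, and for every monic hyperbolic
  p(z) = (z+l_0)...(z+l_{d-1}) and every ordering of the l_i (i.e. every tuple l),
  p_a(z,s) = det(zI + diag(l) + sA) for all z, s.\<close>
definition associated_matrix :: "nat \<Rightarrow> (nat \<Rightarrow> real) \<Rightarrow> real mat \<Rightarrow> bool" where
  "associated_matrix d a A \<longleftrightarrow> A \<in> carrier_mat d d \<and> A\<^sup>T = A \<and>
     (\<forall>l :: nat \<Rightarrow> real. \<forall>z s.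
        poly (nuij_poly d a (\<Prod>i<d. [:l i, 1:]) s) z
          = det (z \<cdot>\<^sub>m 1\<^sub>m d + mat_diag d l + s \<cdot>\<^sub>m A))"

definition UN_set :: "nat \<Rightarrow> (nat \<Rightarrow> real) set" where
  "UN_set d = {a. nuij_seq d a \<and> (\<exists>A. associated_matrix d a A)}"

definition principal_minor :: "real mat \<Rightarrow> nat set \<Rightarrow> real" where
  "principal_minor A I = det (submatrix A I I)"

end

theory Submission imports Defs begin

definition sig :: "nat \<Rightarrow> nat set \<Rightarrow> nat \<Rightarrow> nat" where
  "sig d I k = (if k < card I then pick I k else if k < d then pick (-I) (k - card I) else k)"

lemma card_I_lt: assumes "I \<subseteq> {..<d}" shows "card {a. a < d \<and> a \<in> I} = card I"
  using assms by (metis (no_types, lifting) Collect_cong Collect_mem_eq lessThan_iff subset_iff)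

lemma card_nI_lt: assumes "I \<subseteq> {..<d}" shows "card {a. a < d \<and> a \<in> -I} = d - card I"
proof -
  have "{a. a < d \<and> a \<in> -I} = {..<d} - I" by auto
  then show ?thesis using assms by (simp add: card_Diff_subset finite_subset)
qed

lemma sig_props:
  assumes "I \<subseteq> {..<d}" and "k < d"
  shows "sig d I k < d" and "sig d I k \<in> I \<longleftrightarrow> k < card I"
proof -
  have fI: "finite I" using assms finite_subset by blast
  have inf: "infinite (-I)" using fI by (simp add: Compl_eq_Diff_UNIV infinite_UNIV_nat Diff_infinite_finite)
  show "sig d I k < d"
  proof (cases "k < card I")
    case True
    then show ?thesis unfolding sig_def using pick_le[of k d I] card_I_lt[OF assms(1)] by auto
  next
    case False
    then show ?thesis unfolding sig_def using pick_le[of "k - card I" d "-I"] card_nI_lt[OF assms(1)] assms(2) by auto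
  qed
  show "sig d I k \<in> I \<longleftrightarrow> k < card I"
  proof (cases "k < card I")
    case True
    then show ?thesis unfolding sig_def using pick_in_set[of k I] by auto
  next
    case False
    then show ?thesis unfolding sig_def using pick_in_set[of "k - card I" "-I"] inf assms(2) by auto
  qed
qed

lemma sig_inj:
  assumes "I \<subseteq> {..<d}" shows "inj_on (sig d I) {..<d}"
proof (rule inj_onI)
  have fI: "finite I" using assms finite_subset by blast
  have inf: "infinite (-I)" using fI by (simp add: Compl_eq_Diff_UNIV infinite_UNIV_nat Diff_infinite_finite)
  fix x y assume x: "x \<in> {..<d}" and y: "y \<in> {..<d}" and e: "sig d I x = sig d I y"
  have c: "x < card I \<longleftrightarrow> y < card I" using sig_props(2)[OF assms, of x] sig_props(2)[OF assms, of y] x y e by auto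
  show "x = y"
  proof (rule ccontr)
    assume "x \<noteq> y"
    then consider "x < y" | "y < x" by linarith
    then show False
    proof cases
      case 1
      show False
      proof (cases "y < card I")
        case True
        then show ?thesis using pick_mono[of y I x] 1 e unfolding sig_def using c by auto
      next
        case False
        then have "x - card I < y - card I" using c 1 by auto
        then show ?thesis using pick_mono[of "y - card I" "-I" "x - card I"] inf e x y c False unfolding sig_def by auto
      qed
    next
      case 2
      show False
      proof (cases "x < card I")
        case True
        then show ?thesis using pick_mono[of x I y] 2 e unfolding sig_def using c by auto
      next
        case False
        then have "y - card I < x - card I" using c 2 by auto
        then show ?thesis using pick_mono[of "x - card I" "-I" "y - card I"] inf e x y c False unfolding sig_def by auto
      qed
    qed
  qed
qed

lemma sig_permutes:
  assumes "I \<subseteq> {..<d}" shows "sig d I permutes {0..<d}"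
proof (rule bij_imp_permutes)
  have im: "sig d I ` {..<d} \<subseteq> {..<d}" using sig_props(1)[OF assms] by auto
  have "sig d I ` {..<d} = {..<d}" by (rule endo_inj_surj[OF _ im sig_inj[OF assms]]) auto
  then show "bij_betw (sig d I) {0..<d} {0..<d}" using sig_inj[OF assms]
    by (simp add: bij_betw_def atLeast0LessThan)
  show "\<And>x. x \<notin> {0..<d} \<Longrightarrow> sig d I x = x"
    using assms card_mono[OF _ assms] unfolding sig_def by auto
qed

lemma det_conj_perm:
  fixes M :: "'a::comm_ring_1 mat"
  assumes M: "M \<in> carrier_mat n n" and p: "p permutes {0..<n}"
  shows "det (mat n n (\<lambda>(i,k). M $$ (p i, p k))) = det M"
proof -
  have pn: "\<And>i. i < n \<Longrightarrow> p i < n" using p permutes_in_image by fastforce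
  define N1 where "N1 = mat n n (\<lambda>(i,k). M $$ (p i, k))"
  have d1: "det N1 = signof p * det M" unfolding N1_def by (rule det_permute_rows[OF M p])
  have N1c: "N1 \<in> carrier_mat n n" unfolding N1_def by simp
  have eq: "transpose_mat (mat n n (\<lambda>(i,k). M $$ (p i, p k))) = mat n n (\<lambda>(i,k). transpose_mat N1 $$ (p i, k))"
    by (rule eq_matI) (auto simp: N1_def pn)
  have "det (mat n n (\<lambda>(i,k). M $$ (p i, p k))) = det (transpose_mat (mat n n (\<lambda>(i,k). M $$ (p i, p k))))"
    by (rule det_transpose[symmetric, of _ n]) simp
  also have "\<dots> = signof p * det (transpose_mat N1)" unfolding eq
    by (rule det_permute_rows[OF _ p]) (simp add: N1c)
  also have "\<dots> = signof p * (signof p * det M)" using det_transpose[OF N1c] d1 by simp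
  also have "\<dots> = det M" by (simp add: sign_def)
  finally show ?thesis .
qed

definition Fm :: "nat \<Rightarrow> real mat \<Rightarrow> nat set \<Rightarrow> real \<Rightarrow> real mat" where
  "Fm d A I s = mat d d (\<lambda>(a,b). (if a = b \<and> a \<notin> I then 1 else 0) + s * A $$ (a,b))"

definition Nm :: "nat \<Rightarrow> real mat \<Rightarrow> nat set \<Rightarrow> real \<Rightarrow> real mat" where
  "Nm d A I s = mat d d (\<lambda>(a,b). if a < card I then A $$ (sig d I a, sig d I b)
      else (if a = b then 1 else 0) + s * A $$ (sig d I a, sig d I b))"

lemma det_Fm:
  assumes I: "I \<subseteq> {..<d}"
  shows "det (Fm d A I s) = s ^ card I * det (Nm d A I s)"
proof -
  let ?p = "sig d I"
  have cI: "card I \<le> d" using card_mono[OF _ I] by simp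
  have "det (Fm d A I s) = det (mat d d (\<lambda>(a,b). Fm d A I s $$ (?p a, ?p b)))"
    by (rule det_conj_perm[symmetric, OF _ sig_permutes[OF I]]) (simp add: Fm_def)
  also have "mat d d (\<lambda>(a,b). Fm d A I s $$ (?p a, ?p b))
     = mat d d (\<lambda>(a,b). (if a < card I then s else 1) * Nm d A I s $$ (a,b))"
  proof (rule eq_matI)
    fix a b assume a: "a < dim_row (mat d d (\<lambda>(a,b). (if a < card I then s else 1) * Nm d A I s $$ (a,b)))"
      and b: "b < dim_col (mat d d (\<lambda>(a,b). (if a < card I then s else 1) * Nm d A I s $$ (a,b)))"
    then have a: "a < d" and b: "b < d" by auto
    have e: "?p a = ?p b \<longleftrightarrow> a = b" using sig_inj[OF I] a b by (auto dest: inj_onD)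
    show "mat d d (\<lambda>(a,b). Fm d A I s $$ (?p a, ?p b)) $$ (a, b) =
       mat d d (\<lambda>(a,b). (if a < card I then s else 1) * Nm d A I s $$ (a,b)) $$ (a, b)"
      using a b e sig_props[OF I a] sig_props[OF I b] by (auto simp: Fm_def Nm_def)
  qed auto
  also have "det (mat d d (\<lambda>(a,b). (if a < card I then s else 1) * Nm d A I s $$ (a,b)))
     = (\<Prod>i=0..<d. (if i < card I then s else 1)) * det (Nm d A I s)"
  proof -
    have "det (mat d d (\<lambda>(a,b). (if a < card I then s else 1) * Nm d A I s $$ (a,b)))
      = (\<Sum>p\<in>{p. p permutes {0..<d}}. signof p * (\<Prod>i=0..<d. (if i < card I then s else 1) * Nm d A I s $$ (i, p i)))"
      apply (subst det_def'[of _ d], simp)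
      apply (rule sum.cong, simp)
      apply (rule arg_cong[where f="\<lambda>x. _ * x"])
      apply (rule prod.cong, simp)
      using permutes_in_image by fastforce
    also have "\<dots> = (\<Prod>i=0..<d. (if i < card I then s else 1)) * det (Nm d A I s)"
      by (subst det_def'[of _ d]) (auto simp: Nm_def prod.distrib sum_distrib_left ac_simps)
    finally show ?thesis .
  qed
  also have "(\<Prod>i=0..<d. (if i < card I then (s::real) else 1)) = s ^ card I"
  proof -
    have "{0..<d} \<inter> {i. i < card I} = {0..<card I}" using cI by auto
    then show ?thesis by (simp add: prod.If_cases)
  qed
  finally show ?thesis .
qed

lemma det_Nm0:
  assumes I: "I \<subseteq> {..<d}" and A: "A \<in> carrier_mat d d"
  shows "det (Nm d A I 0) = det (submatrix A I I)"
proof -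
  let ?j = "card I"
  have cI: "?j \<le> d" using card_mono[OF _ I] by simp
  have cr: "card {i. i < dim_row A \<and> i \<in> I} = ?j" "card {i. i < dim_col A \<and> i \<in> I} = ?j"
    using card_I_lt[OF I] A by auto
  have B: "submatrix A I I \<in> carrier_mat ?j ?j" unfolding carrier_mat_def mem_Collect_eq dim_submatrix cr by (rule conjI refl)+
  define X where "X = mat ?j (d - ?j) (\<lambda>(a,b). A $$ (sig d I a, sig d I (b + ?j)))"
  have "Nm d A I 0 = four_block_mat (submatrix A I I) X (0\<^sub>m (d - ?j) ?j) (1\<^sub>m (d - ?j))"
  proof (rule eq_matI)
    fix a b assume "a < dim_row (four_block_mat (submatrix A I I) X (0\<^sub>m (d - ?j) ?j) (1\<^sub>m (d - ?j)))"
      "b < dim_col (four_block_mat (submatrix A I I) X (0\<^sub>m (d - ?j) ?j) (1\<^sub>m (d - ?j)))"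
    then have a: "a < d" and b: "b < d" using B cI by auto
    have dB: "dim_row (submatrix A I I) = ?j" "dim_col (submatrix A I I) = ?j" using B by auto
    have idx: "four_block_mat (submatrix A I I) X (0\<^sub>m (d - ?j) ?j) (1\<^sub>m (d - ?j)) $$ (a, b)
      = (if a < ?j then if b < ?j then submatrix A I I $$ (a,b) else X $$ (a, b - ?j)
         else if b < ?j then (0\<^sub>m (d - ?j) ?j :: real mat) $$ (a - ?j, b) else (1\<^sub>m (d - ?j) :: real mat) $$ (a - ?j, b - ?j))"
      by (subst index_mat_four_block(1)) (use a b cI dB in \<open>simp_all add: index_one_mat(2,3) index_zero_mat(2,3)\<close>)
    have nm: "Nm d A I 0 $$ (a, b) = (if a < ?j then A $$ (sig d I a, sig d I b) else (if a = b then 1 else 0))"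
      unfolding Nm_def using a b by simp
    show "Nm d A I 0 $$ (a, b) = four_block_mat (submatrix A I I) X (0\<^sub>m (d - ?j) ?j) (1\<^sub>m (d - ?j)) $$ (a, b)"
    proof (cases "a < ?j")
      case aj: True
      show ?thesis
      proof (cases "b < ?j")
        case True
        have "submatrix A I I $$ (a,b) = A $$ (pick I a, pick I b)"
          using submatrix_index[of a A I b I] cr aj True by simp
        then show ?thesis using aj True unfolding idx nm sig_def by simp
      next
        case False
        have "X $$ (a, b - ?j) = A $$ (sig d I a, sig d I (b - ?j + ?j))"
          unfolding X_def using aj False b by simp
        then show ?thesis using aj False unfolding idx nm by simp
      qed
    next
      case False
      then show ?thesis using a b unfolding idx nm by auto
    qed
  qed (use B cI in \<open>auto simp: Nm_def\<close>)
  then have "det (Nm d A I 0) = det (submatrix A I I) * det (1\<^sub>m (d - ?j) :: real mat)"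
    using det_four_block_mat_lower_left_zero[OF B, of X "d - ?j"] by (simp add: X_def)
  then show ?thesis by simp
qed

lemma cont_if_const[continuous_intros]:
  "continuous_on S f \<Longrightarrow> continuous_on S g \<Longrightarrow> continuous_on S (\<lambda>x. if c then f x else g x)"
  by (cases c) auto

lemma cont_Nm:
  assumes I: "I \<subseteq> {..<d}"
  shows "continuous_on UNIV (\<lambda>s. det (Nm d A I s))"
proof -
  have eq: "(\<lambda>s. det (Nm d A I s)) = (\<lambda>s. (\<Sum>p\<in>{p. p permutes {0..<d}}. signof p * (\<Prod>i=0..<d.
      (if i < card I then A $$ (sig d I i, sig d I (p i))
      else (if i = p i then 1 else 0) + s * A $$ (sig d I i, sig d I (p i))))))"
    apply (rule ext)
    apply (subst det_def'[of _ d], simp add: Nm_def)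
    apply (rule sum.cong, simp)
    apply (rule arg_cong[where f="\<lambda>x. _ * x"])
    apply (rule prod.cong, simp)
    using permutes_in_image by (fastforce simp: Nm_def)
  show ?thesis unfolding eq
    by (intro continuous_intros)
qed

lemma prod_ind:
  assumes I: "I \<subseteq> {..<d}"
  shows "(\<Prod>i<d. [:(if i \<in> I then 0 else 1::real), 1:]) = [:0,1:] ^ card I * [:1,1:] ^ (d - card I)"
proof -
  have "(\<Prod>i<d. [:(if i \<in> I then 0 else 1::real), 1:]) = (\<Prod>i<d. if i \<in> I then [:0,1:] else [:1,1:])"
    by (rule prod.cong) auto
  also have "\<dots> = [:0,1:] ^ card ({..<d} \<inter> {i. i \<in> I}) * [:1,1:] ^ card ({..<d} \<inter> - {i. i \<in> I})"
    by (simp add: prod.If_cases)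
  also have "{..<d} \<inter> {i. i \<in> I} = I" using I by auto
  also have "{..<d} \<inter> - {i. i \<in> I} = {..<d} - I" by auto
  also have "card ({..<d} - I) = d - card I" using I by (simp add: card_Diff_subset finite_subset)
  finally show ?thesis .
qed

lemma Fm_eq:
  assumes A: "A \<in> carrier_mat d d"
  shows "0 \<cdot>\<^sub>m 1\<^sub>m d + mat_diag d (\<lambda>i. if i \<in> I then 0 else 1) + s \<cdot>\<^sub>m A = Fm d A I s"
  by (rule eq_matI) (use A in \<open>auto simp: Fm_def mat_diag_def\<close>)

lemma cont_eq0:
  fixes f g :: "real \<Rightarrow> real"
  assumes "continuous_on UNIV f" "continuous_on UNIV g" "\<And>s. s \<noteq> 0 \<Longrightarrow> f s = g s"
  shows "f 0 = g 0"
proof -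
  have "(f \<longlongrightarrow> f 0) (at 0)" using assms(1) by (simp add: continuous_on_def)
  moreover have "(f \<longlongrightarrow> g 0) (at 0)"
  proof -
    have "(g \<longlongrightarrow> g 0) (at 0)" using assms(2) by (simp add: continuous_on_def)
    moreover have "eventually (\<lambda>s. g s = f s) (at 0)"
      using assms(3) by (auto simp: eventually_at_filter)
    ultimately show ?thesis by (rule Lim_transform_eventually)
  qed
  ultimately show ?thesis using tendsto_unique[OF at_neq_bot] by blast
qed

theorem lemma3p3:
  fixes d j :: nat and a :: "nat \<Rightarrow> real" and A :: "real mat" and I J :: "nat set"
  assumes "a \<in> UN_set d"
    and "associated_matrix d a A"
    and "1 \<le> j" and "j \<le> d"
    and "I \<subseteq> {..<d}" and "card I = j"
    and "J \<subseteq> {..<d}" and "card J = j"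
  shows "principal_minor A I = principal_minor A J"
proof -
  have A: "A \<in> carrier_mat d d" and H: "\<And>l z s. poly (nuij_poly d a (\<Prod>i<d. [:l i, 1:]) s) z
          = det (z \<cdot>\<^sub>m 1\<^sub>m d + mat_diag d l + s \<cdot>\<^sub>m A)"
    using assms(2) unfolding associated_matrix_def by auto
  have FF: "det (Fm d A I s) = det (Fm d A J s)" for s
  proof -
    have "det (Fm d A I s) = poly (nuij_poly d a (\<Prod>i<d. [:(if i \<in> I then 0 else 1::real), 1:]) s) 0"
      unfolding Fm_eq[OF A, of I s, symmetric] by (rule H[symmetric])
    also have "\<dots> = poly (nuij_poly d a (\<Prod>i<d. [:(if i \<in> J then 0 else 1::real), 1:]) s) 0"
      unfolding prod_ind[OF assms(5)] prod_ind[OF assms(7)] assms(6,8) ..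
    also have "\<dots> = det (Fm d A J s)"
      unfolding Fm_eq[OF A, of J s, symmetric] by (rule H)
    finally show ?thesis .
  qed
  have "det (Nm d A I s) = det (Nm d A J s)" if "s \<noteq> 0" for s
  proof -
    have "s ^ j * det (Nm d A I s) = det (Fm d A I s)"
      unfolding det_Fm[OF assms(5), of A s] assms(6) ..
    also have "\<dots> = det (Fm d A J s)" by (rule FF)
    also have "\<dots> = s ^ j * det (Nm d A J s)"
      unfolding det_Fm[OF assms(7), of A s] assms(8) ..
    finally have "s ^ j * det (Nm d A I s) = s ^ j * det (Nm d A J s)" .
    then show ?thesis using that by simp
  qed
  then have "det (Nm d A I 0) = det (Nm d A J 0)"
    by (rule cont_eq0[OF cont_Nm[OF assms(5)] cont_Nm[OF assms(7)]])
  then show ?thesis unfolding principal_minor_def det_Nm0[OF assms(5) A, symmetric] det_Nm0[OF assms(7) A, symmetric] .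
qed

end
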